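(* Over undirected graphs, the node classifier $\varphi_{\mathit{GadLin}}(x)$ is not expressible in $\mathrm{C}^2$: there is no $\mathrm{C}^2$ formula $\varphi(x)$ over the signature $\{E,P_1,P_2,P_3\}$ such that for every undirected graph $G$ of dimension 3 and every node $v$ of $G$, $G\models\varphi(v)$ iff $G$ is isomorphic to $\mathsf{gad}(G')$ for some directed graph $G'$ whose edge relation is a strict linear order.
   Context: A directed graph of dimension $d$ is $G=(V,E,\lambda)$ with $V$ finite, $E\subseteq V\times V$ without loops, $\lambda:V\to\{0,1\}^d$; it is viewed as a first-order structure with relation $E$ and unary predicates $P_i=\{v:\lambda(v)_i=1\}$. Undirected graphs are directed graphs with symmetric $E$; $\{v,w\}$ denotes the pair $(v,w),(w,v)$. $\mathrm{C}^2$ is the fragment of first-order logic with equality using only two variables $x,y$ but allowing counting quantifiers $\exists_k$ for every $k\in\mathbb{N}$ ("at least $k$ distinct elements such that"). The gadgetisation $\mathsf{gad}(G)$ of a directed graph $G=(V,E,\lambda)$ is the undirected graph $(V',E',\lambda')$ of dimension 3 such that for each edge $(u,w)\in E$: $V'$ contains $v_u^1, v_{(u,w)}^2, v_{(u,w)}^3, v_w^1$; $E'$ contains $\{v_u^1,v_{(u,w)}^2\}$, $\{v_{(u,w)}^2,v_{(u,w)}^3\}$, $\{v_{(u,w)}^3,v_w^1\}$; $\lambda'(v_u^1)=\lambda'(v_w^1)=(1,0,0)$, $\lambda'(v^2_{(u,w)})=(0,1,0)$, $\lambda'(v^3_{(u,w)})=(0,0,1)$ (no other nodes or edges). A strict linear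 order is an irreflexive, transitive, total relation. $\varphi_{\mathit{GadLin}}(x)$ accepts a node of $G$ iff $G$ is isomorphic to $\mathsf{gad}(G')$ for some strict linear order $G'$. *)

theory Defs
  imports Main
begin

(* A (labelled) directed graph: vertex set, edge relation, labelling.
   lab v i is coordinate i+1 of lambda(v) (i.e. v \<in> P_(i+1)); only
   coordinates i < d matter for a graph of dimension d. *)
record 'a graph =
  verts :: "'a set"
  edges :: "('a \<times> 'a) set"
  lab   :: "'a \<Rightarrow> nat \<Rightarrow> bool"

definition dgraph :: "'a graph \<Rightarrow> bool" where
  "dgraph G \<longleftrightarrow> finite (verts G) \<and> edges G \<subseteq> verts G \<times> verts G
      \<and> (\<forall>v. (v, v) \<notin> edges G)"

definition ugraph :: "'a graph \<Rightarrow> bool" where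
  "ugraph G \<longleftrightarrow> dgraph G \<and> sym (edges G)"

definition graph_iso :: "nat \<Rightarrow> 'a graph \<Rightarrow> 'b graph \<Rightarrow> bool" where
  "graph_iso d G H \<longleftrightarrow> (\<exists>f. bij_betw f (verts G) (verts H)
      \<and> (\<forall>u\<in>verts G. \<forall>w\<in>verts G. (u, w) \<in> edges G \<longleftrightarrow> (f u, f w) \<in> edges H)
      \<and> (\<forall>v\<in>verts G. \<forall>i<d. lab G v i = lab H (f v) i))"

datatype 'a gnode = N1 'a | N2 "'a \<times> 'a" | N3 "'a \<times> 'a"

definition gad :: "'a graph \<Rightarrow> 'a gnode graph" where
  "gad G = \<lparr> verts = (\<Union>(u, w)\<in>edges G. {N1 u, N2 (u, w), N3 (u, w), N1 w}),
             edges = (\<Union>(u, w)\<in>edges G.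
                 {(N1 u, N2 (u, w)), (N2 (u, w), N1 u),
                  (N2 (u, w), N3 (u, w)), (N3 (u, w), N2 (u, w)),
                  (N3 (u, w), N1 w), (N1 w, N3 (u, w))}),
             lab = (\<lambda>v i. case v of N1 _ \<Rightarrow> i = 0 | N2 _ \<Rightarrow> i = 1 | N3 _ \<Rightarrow> i = 2) \<rparr>"

datatype var = X | Y
datatype upred = P1 | P2 | P3

datatype c2 =
    CEq var var
  | CE var var
  | CP upred var
  | CNot c2
  | CAnd c2 c2
  | CEx nat var c2

fun fv :: "c2 \<Rightarrow> var set" where
  "fv (CEq x y) = {x, y}"
| "fv (CE x y) = {x, y}"
| "fv (CP p x) = {x}"
| "fv (CNot f) = fv f"
| "fv (CAnd f g) = fv f \<union> fv g"
| "fv (CEx k x f) = fv f - {x}"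

fun pidx :: "upred \<Rightarrow> nat" where
  "pidx P1 = 0" | "pidx P2 = 1" | "pidx P3 = 2"

fun sat :: "'a graph \<Rightarrow> c2 \<Rightarrow> (var \<Rightarrow> 'a) \<Rightarrow> bool" where
  "sat G (CEq x y) a = (a x = a y)"
| "sat G (CE x y) a = ((a x, a y) \<in> edges G)"
| "sat G (CP p x) a = lab G (a x) (pidx p)"
| "sat G (CNot f) a = (\<not> sat G f a)"
| "sat G (CAnd f g) a = (sat G f a \<and> sat G g a)"
| "sat G (CEx k x f) a = (k \<le> card {v \<in> verts G. sat G f (a(x := v))})"

end

theory Submission
  imports Defs "HOL-Library.Nat_Bijection"
begin

fun depth :: "c2 \<Rightarrow> nat" where
  "depth (CEq x y) = 0" | "depth (CE x y) = 0" | "depth (CP p x) = 0"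
| "depth (CNot f) = depth f" | "depth (CAnd f g) = max (depth f) (depth g)"
| "depth (CEx k x f) = Suc (depth f)"

fun maxk :: "c2 \<Rightarrow> nat" where
  "maxk (CEq x y) = 0" | "maxk (CE x y) = 0" | "maxk (CP p x) = 0"
| "maxk (CNot f) = maxk f" | "maxk (CAnd f g) = max (maxk f) (maxk g)"
| "maxk (CEx k x f) = max k (maxk f)"

definition AR :: "'a graph \<Rightarrow> 'b graph \<Rightarrow> ('a \<Rightarrow> 'b \<Rightarrow> bool) \<Rightarrow> (var \<Rightarrow> 'a) \<Rightarrow> (var \<Rightarrow> 'b) \<Rightarrow> bool" where
  "AR G H R a b \<longleftrightarrow> (\<forall>u. a u \<in> verts G \<and> b u \<in> verts H \<and> R (a u) (b u) \<and>
      (\<forall>w. (a u = a w \<longleftrightarrow> b u = b w) \<and> ((a u, a w) \<in> edges G \<longleftrightarrow> (b u, b w) \<in> edges H)))"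

definition fwd :: "nat \<Rightarrow> 'a graph \<Rightarrow> 'b graph \<Rightarrow> ('a \<Rightarrow> 'b \<Rightarrow> bool) \<Rightarrow> ('a \<Rightarrow> 'b \<Rightarrow> bool) \<Rightarrow> bool" where
  "fwd K G H R R' \<longleftrightarrow> (\<forall>x x' A. R x x' \<longrightarrow> x \<in> verts G \<longrightarrow> x' \<in> verts H \<longrightarrow> A \<subseteq> verts G \<longrightarrow> card A \<le> K \<longrightarrow>
     (\<exists>g. inj_on g A \<and> g ` A \<subseteq> verts H \<and> (\<forall>v\<in>A. R' v (g v) \<and> (v = x \<longleftrightarrow> g v = x') \<and>
         ((x, v) \<in> edges G \<longleftrightarrow> (x', g v) \<in> edges H))))"

lemma var_cases2: "u = x \<or> u = (if x = X then Y else X)"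
  by (cases u; cases x) auto

lemma AR_upd:
  assumes ar: "AR G H (Rn (Suc m)) a b"
    and down: "\<forall>m x x'. Rn (Suc m) x x' \<longrightarrow> Rn m x x'"
    and irG: "\<forall>v. (v, v) \<notin> edges G" and irH: "\<forall>v. (v, v) \<notin> edges H"
    and sG: "sym (edges G)" and sH: "sym (edges H)"
    and y: "y = (if x = X then Y else X)"
    and v: "v \<in> verts G" "v' \<in> verts H" "Rn m v v'"
    and eq: "v = a y \<longleftrightarrow> v' = b y"
    and ed: "(a y, v) \<in> edges G \<longleftrightarrow> (b y, v') \<in> edges H"
  shows "AR G H (Rn m) (a(x := v)) (b(x := v'))"
proof -
  have yx: "y \<noteq> x" using y by (cases x) auto
  have ed2: "(v, a y) \<in> edges G \<longleftrightarrow> (v', b y) \<in> edges H"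
    using ed sG sH by (auto dest: symD)
  have c: "\<And>u. u = x \<or> u = y" using var_cases2 y by blast
  have ay: "a y \<in> verts G" "b y \<in> verts H" "Rn m (a y) (b y)"
    "(a y = a y \<longleftrightarrow> b y = b y)" "((a y, a y) \<in> edges G \<longleftrightarrow> (b y, b y) \<in> edges H)"
    using ar down unfolding AR_def by blast+
  show ?thesis unfolding AR_def
  proof (intro allI conjI)
    fix u w
    have cu: "u = x \<or> u = y" and cw: "w = x \<or> w = y" by (rule c)+
    show "(a(x := v)) u \<in> verts G" "(b(x := v')) u \<in> verts H" "Rn m ((a(x := v)) u) ((b(x := v')) u)"
      using cu ay v yx by (elim disjE; simp)+
    show "((a(x := v)) u = (a(x := v)) w) = ((b(x := v')) u = (b(x := v')) w)"
      using cu cw ay v yx eq by (elim disjE; simp; blast)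
    show "(((a(x := v)) u, (a(x := v)) w) \<in> edges G) = (((b(x := v')) u, (b(x := v')) w) \<in> edges H)"
      using cu cw ay v yx ed ed2 irG irH by (elim disjE; simp)
  qed
qed

lemma invariance:
  assumes finG: "finite (verts G)" and finH: "finite (verts H)"
    and irG: "\<forall>v. (v, v) \<notin> edges G" and irH: "\<forall>v. (v, v) \<notin> edges H"
    and sG: "sym (edges G)" and sH: "sym (edges H)"
    and lab: "\<forall>m x x'. Rn m x x' \<longrightarrow> lab G x = lab H x'"
    and down: "\<forall>m x x'. Rn (Suc m) x x' \<longrightarrow> Rn m x x'"
    and F: "\<forall>m. Suc m \<le> M \<longrightarrow> fwd K G H (Rn (Suc m)) (Rn m)"
    and B: "\<forall>m. Suc m \<le> M \<longrightarrow> fwd K H G (\<lambda>y x. Rn (Suc m) x y) (\<lambda>y x. Rn m x y)"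
  shows "depth \<phi> \<le> m \<Longrightarrow> m \<le> M \<Longrightarrow> maxk \<phi> \<le> K \<Longrightarrow> AR G H (Rn m) a b \<Longrightarrow> sat G \<phi> a = sat H \<phi> b"
proof (induction \<phi> arbitrary: m a b)
  case (CEq u w) then show ?case by (simp add: AR_def)
next
  case (CE u w) then show ?case by (simp add: AR_def)
next
  case (CP p u) then show ?case using lab unfolding AR_def by (metis sat.simps(3))
next
  case (CNot f) then show ?case by simp
next
  case (CAnd f g)
  have d: "depth f \<le> m" "maxk f \<le> K" "depth g \<le> m" "maxk g \<le> K" using CAnd.prems by auto
  have "sat G f a = sat H f b" by (rule CAnd.IH(1)[OF d(1) CAnd.prems(2) d(2) CAnd.prems(4)])
  moreover have "sat G g a = sat H g b" by (rule CAnd.IH(2)[OF d(3) CAnd.prems(2) d(4) CAnd.prems(4)])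
  ultimately show ?case by simp
next
  case (CEx k x f)
  obtain m' where m: "m = Suc m'" using CEx.prems(1) by (cases m) auto
  define y where "y = (if x = X then Y else X)"
  have ar: "AR G H (Rn (Suc m')) a b" using CEx.prems m by simp
  have Ry: "Rn (Suc m') (a y) (b y)" "a y \<in> verts G" "b y \<in> verts H"
    using ar unfolding AR_def by blast+
  have kK: "k \<le> K" using CEx.prems by simp
  have fd: "depth f \<le> m'" "m' \<le> M" "maxk f \<le> K" using CEx.prems m by auto
  have Fm: "fwd K G H (Rn (Suc m')) (Rn m')" "fwd K H G (\<lambda>y x. Rn (Suc m') x y) (\<lambda>y x. Rn m' x y)"
    using F B CEx.prems m by auto
  let ?SG = "{v \<in> verts G. sat G f (a(x := v))}"
  let ?SH = "{v \<in> verts H. sat H f (b(x := v))}"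
  have "k \<le> card ?SG \<longleftrightarrow> k \<le> card ?SH"
  proof
    assume "k \<le> card ?SG"
    then obtain A where A: "A \<subseteq> ?SG" "card A = k" by (meson obtain_subset_with_card_n)
    then obtain g where g: "inj_on g A" "g ` A \<subseteq> verts H" "\<forall>v\<in>A. Rn m' v (g v) \<and> (v = a y \<longleftrightarrow> g v = b y) \<and>
         ((a y, v) \<in> edges G \<longleftrightarrow> (b y, g v) \<in> edges H)"
      using Fm(1)[unfolded fwd_def, rule_format, OF Ry(1) Ry(2) Ry(3), of A] A kK by auto
    have "g ` A \<subseteq> ?SH"
    proof
      fix w assume "w \<in> g ` A"
      then obtain v where v: "v \<in> A" "w = g v" by auto
      have "AR G H (Rn m') (a(x := v)) (b(x := g v))"
        by (rule AR_upd[OF ar down irG irH sG sH y_def]) (use v g A in auto)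
      then have "sat G f (a(x := v)) = sat H f (b(x := g v))" using CEx.IH fd by blast
      then show "w \<in> ?SH" using v A g by auto
    qed
    then have "card (g ` A) \<le> card ?SH" by (intro card_mono) (use finH in auto)
    then show "k \<le> card ?SH" using g A card_image by metis
  next
    assume "k \<le> card ?SH"
    then obtain A where A: "A \<subseteq> ?SH" "card A = k" by (meson obtain_subset_with_card_n)
    then obtain g where g: "inj_on g A" "g ` A \<subseteq> verts G" "\<forall>v\<in>A. Rn m' (g v) v \<and> (v = b y \<longleftrightarrow> g v = a y) \<and>
         ((b y, v) \<in> edges H \<longleftrightarrow> (a y, g v) \<in> edges G)"
      using Fm(2)[unfolded fwd_def, rule_format, OF Ry(1) Ry(3) Ry(2), of A] A kK by auto
    have "g ` A \<subseteq> ?SG"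
    proof
      fix w assume "w \<in> g ` A"
      then obtain v where v: "v \<in> A" "w = g v" by auto
      have "AR G H (Rn m') (a(x := g v)) (b(x := v))"
        by (rule AR_upd[OF ar down irG irH sG sH y_def]) (use v g A in auto)
      then have "sat G f (a(x := g v)) = sat H f (b(x := v))" using CEx.IH fd by blast
      then show "w \<in> ?SG" using v A g by auto
    qed
    then have "card (g ` A) \<le> card ?SG" by (intro card_mono) (use finG in auto)
    then show "k \<le> card ?SG" using g A card_image by metis
  qed
  then show ?case by simp
qed

definition rk :: "'a graph \<Rightarrow> 'a \<Rightarrow> 'a \<Rightarrow> nat" where
  "rk G x v = (if v = x then 0 else if (x, v) \<in> edges G then 1 else 2)"

definition Cls :: "'a graph \<Rightarrow> ('a \<Rightarrow> 'c) \<Rightarrow> 'a \<Rightarrow> 'c \<Rightarrow> nat \<Rightarrow> 'a set" where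
  "Cls G \<tau> x t r = {v \<in> verts G. \<tau> v = t \<and> rk G x v = r}"

lemma inj_classes:
  assumes "finite A" "finite VH" "\<forall>z. card {v\<in>A. c v = z} \<le> card {w\<in>VH. d w = z}"
  shows "\<exists>g. inj_on g A \<and> g ` A \<subseteq> VH \<and> (\<forall>v\<in>A. d (g v) = c v)"
proof -
  have ex: "\<forall>z. \<exists>f. f ` {v\<in>A. c v = z} \<subseteq> {w\<in>VH. d w = z} \<and> inj_on f {v\<in>A. c v = z}"
  proof
    fix z
    show "\<exists>f. f ` {v\<in>A. c v = z} \<subseteq> {w\<in>VH. d w = z} \<and> inj_on f {v\<in>A. c v = z}"
    proof (rule card_le_inj)
      show "finite {v \<in> A. c v = z}" using assms(1) by simp
      show "finite {w \<in> VH. d w = z}" using assms(2) by simp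
      show "card {v \<in> A. c v = z} \<le> card {w \<in> VH. d w = z}" using assms(3) by blast
    qed
  qed
  obtain F where F: "\<forall>z. F z ` {v\<in>A. c v = z} \<subseteq> {w\<in>VH. d w = z} \<and> inj_on (F z) {v\<in>A. c v = z}"
    using choice[OF ex] by blast
  define g where "g v = F (c v) v" for v
  have im: "g v \<in> VH \<and> d (g v) = c v" if "v \<in> A" for v
  proof -
    have "F (c v) v \<in> {w\<in>VH. d w = c v}" using F that by blast
    then show ?thesis unfolding g_def by simp
  qed
  have "inj_on g A"
  proof (rule inj_onI)
    fix v1 v2 assume v: "v1 \<in> A" "v2 \<in> A" "g v1 = g v2"
    have cc: "c v1 = c v2" using im[OF v(1)] im[OF v(2)] v(3) by simp
    have inj: "inj_on (F (c v1)) {v\<in>A. c v = c v1}" using F by blast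
    have "F (c v1) v1 = F (c v1) v2" using v(3) cc unfolding g_def by simp
    then show "v1 = v2" using inj v cc by (auto dest: inj_onD)
  qed
  then show ?thesis using im by blast
qed

lemma count_fwd:
  assumes fin: "finite (verts G)" "finite (verts H)"
    and cnt: "\<forall>t r. min K (card (Cls G \<tau> x t r)) = min K (card (Cls H \<sigma> x' t r))"
    and A: "A \<subseteq> verts G" "card A \<le> K"
  shows "\<exists>g. inj_on g A \<and> g ` A \<subseteq> verts H \<and> (\<forall>v\<in>A. \<sigma> (g v) = \<tau> v \<and> rk H x' (g v) = rk G x v)"
proof -
  have finA: "finite A" using A fin finite_subset by blast
  have key: "card {v\<in>A. (\<tau> v, rk G x v) = (t, r)} \<le> card {w\<in>verts H. (\<sigma> w, rk H x' w) = (t, r)}" for t r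
  proof -
    have s: "{v\<in>A. (\<tau> v, rk G x v) = (t, r)} \<subseteq> Cls G \<tau> x t r" using A unfolding Cls_def by auto
    have "card {v\<in>A. (\<tau> v, rk G x v) = (t, r)} \<le> card A" using finA by (intro card_mono) auto
    moreover have "card {v\<in>A. (\<tau> v, rk G x v) = (t, r)} \<le> card (Cls G \<tau> x t r)"
      using s fin unfolding Cls_def by (intro card_mono) auto
    ultimately have "card {v\<in>A. (\<tau> v, rk G x v) = (t, r)} \<le> min K (card (Cls G \<tau> x t r))"
      using A(2) by simp
    also have "\<dots> = min K (card (Cls H \<sigma> x' t r))" using cnt by blast
    also have "\<dots> \<le> card {w\<in>verts H. (\<sigma> w, rk H x' w) = (t, r)}" unfolding Cls_def by simp
    finally show ?thesis .
  qed
  have "\<forall>z. card {v\<in>A. (\<lambda>v. (\<tau> v, rk G x v)) v = z} \<le> card {w\<in>verts H. (\<lambda>w. (\<sigma> w, rk H x' w)) w = z}"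
  proof
    fix z
    show "card {v\<in>A. (\<lambda>v. (\<tau> v, rk G x v)) v = z} \<le> card {w\<in>verts H. (\<lambda>w. (\<sigma> w, rk H x' w)) w = z}"
      using key[of "fst z" "snd z"] by simp
  qed
  from inj_classes[OF finA fin(2) this] show ?thesis by auto
qed

lemma count_fwd2:
  assumes fin: "finite (verts G)" "finite (verts H)"
    and irG: "\<forall>v. (v, v) \<notin> edges G" and irH: "\<forall>v. (v, v) \<notin> edges H"
    and cnt: "\<forall>t r. min K (card (Cls G \<tau> x t r)) = min K (card (Cls H \<sigma> x' t r))"
    and A: "A \<subseteq> verts G" "card A \<le> K"
  shows "\<exists>g. inj_on g A \<and> g ` A \<subseteq> verts H \<and> (\<forall>v\<in>A. \<sigma> (g v) = \<tau> v \<and> (v = x \<longleftrightarrow> g v = x') \<and>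
           ((x, v) \<in> edges G \<longleftrightarrow> (x', g v) \<in> edges H))"
proof -
  obtain g where g: "inj_on g A" "g ` A \<subseteq> verts H" "\<forall>v\<in>A. \<sigma> (g v) = \<tau> v \<and> rk H x' (g v) = rk G x v"
    using count_fwd[OF fin cnt A] by blast
  have "\<forall>v\<in>A. (v = x \<longleftrightarrow> g v = x') \<and> ((x, v) \<in> edges G \<longleftrightarrow> (x', g v) \<in> edges H)"
  proof
    fix v assume v: "v \<in> A"
    have r: "rk H x' (g v) = rk G x v" using g v by blast
    show "(v = x \<longleftrightarrow> g v = x') \<and> ((x, v) \<in> edges G \<longleftrightarrow> (x', g v) \<in> edges H)"
      using r irG irH unfolding rk_def by (auto split: if_splits)
  qed
  then show ?thesis using g by blast
qed

lemma Cls0: "x \<in> verts G \<Longrightarrow> Cls G \<tau> x t 0 = (if \<tau> x = t then {x} else {})"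
  unfolding Cls_def rk_def by auto

lemma Cls1: "edges G \<subseteq> verts G \<times> verts G \<Longrightarrow> \<forall>v. (v, v) \<notin> edges G \<Longrightarrow>
   Cls G \<tau> x t 1 = {v. (x, v) \<in> edges G \<and> \<tau> v = t}"
  unfolding Cls_def rk_def by auto

lemma Cls2card:
  assumes "finite (verts G)" "x \<in> verts G"
  shows "card (Cls G \<tau> x t 2) = card {v \<in> verts G. \<tau> v = t} - card (Cls G \<tau> x t 0) - card (Cls G \<tau> x t 1)"
proof -
  have u: "{v \<in> verts G. \<tau> v = t} = Cls G \<tau> x t 2 \<union> (Cls G \<tau> x t 0 \<union> Cls G \<tau> x t 1)"
    unfolding Cls_def rk_def by auto
  have f: "finite (Cls G \<tau> x t r)" for r using assms unfolding Cls_def by auto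
  have "card {v \<in> verts G. \<tau> v = t} = card (Cls G \<tau> x t 2) + card (Cls G \<tau> x t 0 \<union> Cls G \<tau> x t 1)"
    unfolding u by (rule card_Un_disjoint) (use f in \<open>auto simp: Cls_def rk_def\<close>)
  moreover have "card (Cls G \<tau> x t 0 \<union> Cls G \<tau> x t 1) = card (Cls G \<tau> x t 0) + card (Cls G \<tau> x t 1)"
    by (rule card_Un_disjoint) (use f in \<open>auto simp: Cls_def rk_def\<close>)
  ultimately show ?thesis by simp
qed

lemma combine:
  assumes fin: "finite (verts G)" "finite (verts H)" and x: "x \<in> verts G" "x' \<in> verts H"
    and tx: "\<tau> x = \<sigma> x'"
    and tot: "\<forall>t. card {v \<in> verts G. \<tau> v = t} = card {v \<in> verts H. \<sigma> v = t}"
    and c12: "\<forall>t. card (Cls G \<tau> x t 1) = card (Cls H \<sigma> x' t 1) \<or>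
        (K \<le> card (Cls G \<tau> x t 1) \<and> K \<le> card (Cls H \<sigma> x' t 1) \<and> K \<le> card (Cls G \<tau> x t 2) \<and> K \<le> card (Cls H \<sigma> x' t 2))"
  shows "\<forall>t r. min K (card (Cls G \<tau> x t r)) = min K (card (Cls H \<sigma> x' t r))"
proof (intro allI)
  fix t and r :: nat
  have c0: "card (Cls G \<tau> x t 0) = card (Cls H \<sigma> x' t 0)" using x tx by (simp add: Cls0)
  consider "r = 0" | "r = 1" | "r = 2" | "r > 2" by linarith
  then show "min K (card (Cls G \<tau> x t r)) = min K (card (Cls H \<sigma> x' t r))"
  proof cases
    case 1 then show ?thesis using c0 by simp
  next
    case 2 then show ?thesis using c12[rule_format, of t] by (auto simp: min_def)
  next
    case 3
    show ?thesis
    proof (cases "card (Cls G \<tau> x t 1) = card (Cls H \<sigma> x' t 1)")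
      case True
      then show ?thesis using 3 c0 tot[rule_format, of t] Cls2card[OF fin(1) x(1), of \<tau> t] Cls2card[OF fin(2) x(2), of \<sigma> t] by simp
    next
      case False then show ?thesis using 3 c12[rule_format, of t] by (auto simp: min_def)
    qed
  next
    case 4
    then have "Cls G \<tau> x t r = {}" "Cls H \<sigma> x' t r = {}" unfolding Cls_def rk_def by auto
    then show ?thesis by simp
  qed
qed

lemma gad_lab: "lab (gad G) v i = (case v of N1 _ \<Rightarrow> i = 0 | N2 _ \<Rightarrow> i = 1 | N3 _ \<Rightarrow> i = 2)"
  by (simp add: gad_def)

lemma gad_verts:
  "N1 u \<in> verts (gad G) \<longleftrightarrow> (\<exists>w. (u, w) \<in> edges G \<or> (w, u) \<in> edges G)"
  "N2 e \<in> verts (gad G) \<longleftrightarrow> e \<in> edges G"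
  "N3 e \<in> verts (gad G) \<longleftrightarrow> e \<in> edges G"
  by (auto simp: gad_def)

lemma gad_edges:
  "(N1 u, N1 u') \<notin> edges (gad G)"
  "(N2 e, N2 e') \<notin> edges (gad G)"
  "(N3 e, N3 e') \<notin> edges (gad G)"
  "(N1 u, N2 e) \<in> edges (gad G) \<longleftrightarrow> e \<in> edges G \<and> fst e = u"
  "(N2 e, N1 u) \<in> edges (gad G) \<longleftrightarrow> e \<in> edges G \<and> fst e = u"
  "(N2 e, N3 e') \<in> edges (gad G) \<longleftrightarrow> e \<in> edges G \<and> e' = e"
  "(N3 e', N2 e) \<in> edges (gad G) \<longleftrightarrow> e \<in> edges G \<and> e' = e"
  "(N3 e, N1 u) \<in> edges (gad G) \<longleftrightarrow> e \<in> edges G \<and> snd e = u"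
  "(N1 u, N3 e) \<in> edges (gad G) \<longleftrightarrow> e \<in> edges G \<and> snd e = u"
  by (auto simp: gad_def intro!: bexI[of _ e])

lemma gad_irr: "(v, v) \<notin> edges (gad G)"
  by (cases v) (simp_all add: gad_edges)

lemma gad_sym: "sym (edges (gad G))"
  unfolding sym_def by (auto simp: gad_def)

lemma gad_sub: "edges (gad G) \<subseteq> verts (gad G) \<times> verts (gad G)"
  by (auto simp: gad_def)

lemma gad_fin: "finite (edges G) \<Longrightarrow> finite (verts (gad G))"
  by (auto simp: gad_def)

lemma gad_nbr_N1:
  "{v. (N1 i, v) \<in> edges (gad G) \<and> P v} =
     (\<lambda>j. N2 (i, j)) ` {j. (i, j) \<in> edges G \<and> P (N2 (i, j))} \<union> (\<lambda>j. N3 (j, i)) ` {j. (j, i) \<in> edges G \<and> P (N3 (j, i))}"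
proof -
  have "\<And>v. (N1 i, v) \<in> edges (gad G) \<and> P v \<longleftrightarrow> v \<in> (\<lambda>j. N2 (i, j)) ` {j. (i, j) \<in> edges G \<and> P (N2 (i, j))} \<union> (\<lambda>j. N3 (j, i)) ` {j. (j, i) \<in> edges G \<and> P (N3 (j, i))}"
  proof -
    fix v show "?thesis v" by (cases v) (auto simp: gad_edges)
  qed
  then show ?thesis by blast
qed

lemma gad_nbr_N1_card:
  assumes "finite (edges G)"
  shows "card {v. (N1 i, v) \<in> edges (gad G) \<and> P v} =
     card {j. (i, j) \<in> edges G \<and> P (N2 (i, j))} + card {j. (j, i) \<in> edges G \<and> P (N3 (j, i))}"
proof -
  have f1: "finite {j. (i, j) \<in> edges G \<and> P (N2 (i, j))}"
    by (rule finite_subset[of _ "snd ` edges G"]) (use assms in force)+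
  have f2: "finite {j. (j, i) \<in> edges G \<and> P (N3 (j, i))}"
    by (rule finite_subset[of _ "fst ` edges G"]) (use assms in force)+
  show ?thesis unfolding gad_nbr_N1
    by (subst card_Un_disjoint) (use f1 f2 in \<open>auto simp: card_image inj_on_def\<close>)
qed

lemma gad_nbr_N2:
  "e \<in> edges G \<Longrightarrow> {v. (N2 e, v) \<in> edges (gad G) \<and> P v} = {v. v \<in> {N1 (fst e), N3 e} \<and> P v}"
proof -
  assume e: "e \<in> edges G"
  have "\<And>v. (N2 e, v) \<in> edges (gad G) \<longleftrightarrow> v \<in> {N1 (fst e), N3 e}"
  proof -
    fix v show "?thesis v" using e by (cases v) (auto simp: gad_edges)
  qed
  then show ?thesis by blast
qed

lemma gad_nbr_N3:
  "e \<in> edges G \<Longrightarrow> {v. (N3 e, v) \<in> edges (gad G) \<and> P v} = {v. v \<in> {N2 e, N1 (snd e)} \<and> P v}"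
proof -
  assume e: "e \<in> edges G"
  have "\<And>v. (N3 e, v) \<in> edges (gad G) \<longleftrightarrow> v \<in> {N2 e, N1 (snd e)}"
  proof -
    fix v show "?thesis v" using e by (cases v) (auto simp: gad_edges)
  qed
  then show ?thesis by blast
qed

lemma card_two: "p \<noteq> q \<Longrightarrow> card {v. v \<in> {p, q} \<and> P v} = (if P p then 1 else 0) + (if P q then 1 else 0)"
proof -
  assume pq: "p \<noteq> q"
  have "{v. v \<in> {p, q} \<and> P v} = (if P p then {p} else {}) \<union> (if P q then {q} else {})" by auto
  then show ?thesis using pq by simp
qed

datatype cls = Lo nat | Hi nat | Mid

definition cl :: "nat \<Rightarrow> nat \<Rightarrow> nat \<Rightarrow> cls" where
  "cl n D i = (if i < D then Lo i else if n \<le> i + D then Hi (n - 1 - i) else Mid)"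

definition tau :: "nat \<Rightarrow> nat \<Rightarrow> nat gnode \<Rightarrow> nat \<times> cls \<times> cls" where
  "tau n D v = (case v of N1 i \<Rightarrow> (0, cl n D i, Mid) | N2 e \<Rightarrow> (1, cl n D (fst e), cl n D (snd e))
      | N3 e \<Rightarrow> (2, cl n D (fst e), cl n D (snd e)))"

lemma tau_simps[simp]:
  "tau n D (N1 i) = (0, cl n D i, Mid)"
  "tau n D (N2 e) = (1, cl n D (fst e), cl n D (snd e))"
  "tau n D (N3 e) = (2, cl n D (fst e), cl n D (snd e))"
  by (simp_all add: tau_def)

definition T1 :: "nat \<Rightarrow> (nat \<times> nat) set" where
  "T1 n = {(i, j). i < j \<and> j < n}"

definition T2 :: "nat \<Rightarrow> nat \<Rightarrow> (nat \<times> nat) set" where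
  "T2 n a = (T1 n - {(a, a + 2)}) \<union> {(a + 2, a)}"

definition LG :: "nat \<Rightarrow> (nat \<times> nat) set \<Rightarrow> nat graph" where
  "LG n T = \<lparr>verts = {..<n}, edges = T, lab = (\<lambda>_ _. False)\<rparr>"

lemma LG_simps[simp]: "edges (LG n T) = T" "verts (LG n T) = {..<n}"
  by (simp_all add: LG_def)

lemma cl_mid: "cl n D i = Mid \<longleftrightarrow> D \<le> i \<and> i + D < n"
  by (auto simp: cl_def)

lemma cl_nonmid_eq: "i < n \<Longrightarrow> j < n \<Longrightarrow> cl n D i = cl n D j \<Longrightarrow> cl n D i \<noteq> Mid \<Longrightarrow> i = j"
  by (auto simp: cl_def split: if_splits)

lemma cl_ref: "i < n \<Longrightarrow> j < n \<Longrightarrow> D \<le> D' \<Longrightarrow> cl n D' i = cl n D' j \<Longrightarrow> cl n D i = cl n D j"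
proof -
  assume a: "i < n" "j < n" "D \<le> D'" "cl n D' i = cl n D' j"
  show ?thesis
  proof (cases "cl n D' i = Mid")
    case True
    then have "cl n D' j = Mid" using a by simp
    then show ?thesis using True a by (auto simp: cl_def split: if_splits)
  next
    case False
    then have "i = j" using cl_nonmid_eq a by blast
    then show ?thesis by simp
  qed
qed

definition prm :: "nat \<Rightarrow> nat \<Rightarrow> nat \<Rightarrow> nat \<Rightarrow> nat \<Rightarrow> bool" where
  "prm K B D n a \<longleftrightarrow> K + 3 \<le> B \<and> D + B \<le> a \<and> a + 2 + D + B < n"

lemma T_cases: "T \<in> {T1 n, T2 n a} \<Longrightarrow> T = T1 n \<or> T = T2 n a" by simp

lemma T_in: "T \<in> {T1 n, T2 n a} \<Longrightarrow> i < j \<Longrightarrow> j < n \<Longrightarrow> \<not> (i = a \<and> j = a + 2) \<Longrightarrow> (i, j) \<in> T"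
  by (auto simp: T1_def T2_def)

lemma T_bnd: "T \<in> {T1 n, T2 n a} \<Longrightarrow> a + 2 < n \<Longrightarrow> (i, j) \<in> T \<Longrightarrow> i < n \<and> j < n"
  by (auto simp: T1_def T2_def)

lemma T_ord: "T \<in> {T1 n, T2 n a} \<Longrightarrow> (i, j) \<in> T \<Longrightarrow> i < j \<or> (i = a + 2 \<and> j = a)"
  by (auto simp: T1_def T2_def)

lemma T_fin: assumes "T \<in> {T1 n, T2 n a}" "a + 2 < n" shows "finite T"
proof -
  have "T \<subseteq> {..<n} \<times> {..<n}" using T_bnd[OF assms] by auto
  then show ?thesis by (rule finite_subset) auto
qed

lemma N1_verts: "T \<in> {T1 n, T2 n a} \<Longrightarrow> 0 < a \<Longrightarrow> a + 3 < n \<Longrightarrow> N1 i \<in> verts (gad (LG n T)) \<longleftrightarrow> i < n"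
proof -
  assume T: "T \<in> {T1 n, T2 n a}" and a: "0 < a" "a + 3 < n"
  show ?thesis
  proof
    assume "N1 i \<in> verts (gad (LG n T))"
    then show "i < n" using T_bnd[OF T] a by (force simp: gad_verts)
  next
    assume i: "i < n"
    show "N1 i \<in> verts (gad (LG n T))"
    proof (cases "i < n - 1")
      case True
      then have "(i, n - 1) \<in> T" using a by (intro T_in[OF T]) auto
      then show ?thesis by (auto simp: gad_verts)
    next
      case False
      then have "(0, i) \<in> T" using a i by (intro T_in[OF T]) auto
      then show ?thesis by (auto simp: gad_verts)
    qed
  qed
qed


abbreviation GG :: "nat \<Rightarrow> (nat \<times> nat) set \<Rightarrow> nat gnode graph" where
  "GG n T \<equiv> gad (LG n T)"

lemma GG_fin: "T \<in> {T1 n, T2 n a} \<Longrightarrow> a + 2 < n \<Longrightarrow> finite (verts (GG n T))"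
  by (rule gad_fin) (simp add: T_fin)

lemma fin_nbr: "T \<in> {T1 n, T2 n a} \<Longrightarrow> a + 2 < n \<Longrightarrow> finite {v. (x, v) \<in> edges (GG n T) \<and> P v}"
  by (rule finite_subset[OF _ GG_fin]) (use gad_sub in auto)

lemma Cls1_GG: "Cls (GG n T) \<tau> x t 1 = {v. (x, v) \<in> edges (GG n T) \<and> \<tau> v = t}"
  by (rule Cls1) (auto simp: gad_sub gad_irr)

definition sw :: "nat \<Rightarrow> nat \<times> nat \<Rightarrow> nat \<times> nat" where
  "sw a e = (if e = (a, a + 2) then (a + 2, a) else if e = (a + 2, a) then (a, a + 2) else e)"

definition hh :: "nat \<Rightarrow> nat gnode \<Rightarrow> nat gnode" where
  "hh a v = (case v of N1 i \<Rightarrow> N1 i | N2 e \<Rightarrow> N2 (sw a e) | N3 e \<Rightarrow> N3 (sw a e))"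

lemma hh_hh: "hh a (hh a v) = v"
  by (cases v) (auto simp: hh_def sw_def)

lemma sw_T: "a + 2 < n \<Longrightarrow> e \<in> T2 n a \<longleftrightarrow> sw a e \<in> T1 n"
  by (auto simp: sw_def T1_def T2_def)

lemma hh_verts:
  assumes "0 < a" "a + 3 < n"
  shows "v \<in> verts (GG n (T2 n a)) \<longleftrightarrow> hh a v \<in> verts (GG n (T1 n))"
proof (cases v)
  case (N1 i)
  then show ?thesis using N1_verts[of "T1 n" n a i] N1_verts[of "T2 n a" n a i] assms by (simp add: hh_def)
next
  case (N2 e)
  then show ?thesis using assms by (simp add: hh_def gad_verts sw_T)
next
  case (N3 e)
  then show ?thesis using assms by (simp add: hh_def gad_verts sw_T)
qed

lemma hh_tau:
  assumes "D \<le> a" "a + 2 + D < n"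
  shows "tau n D (hh a v) = tau n D v"
proof -
  have m: "cl n D a = Mid" "cl n D (Suc (Suc a)) = Mid" using assms by (auto simp: cl_mid)
  show ?thesis by (cases v) (auto simp: hh_def sw_def m)
qed

lemma tot:
  assumes "0 < a" "a + 3 < n" "D \<le> a" "a + 2 + D < n"
  shows "card {v \<in> verts (GG n (T1 n)). tau n D v = t} = card {v \<in> verts (GG n (T2 n a)). tau n D v = t}"
proof -
  have e: "{v \<in> verts (GG n (T2 n a)). tau n D v = t} = hh a ` {v \<in> verts (GG n (T1 n)). tau n D v = t}"
  proof
    show "{v \<in> verts (GG n (T2 n a)). tau n D v = t} \<subseteq> hh a ` {v \<in> verts (GG n (T1 n)). tau n D v = t}"
    proof
      fix v assume v: "v \<in> {v \<in> verts (GG n (T2 n a)). tau n D v = t}"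
      have "hh a v \<in> {v \<in> verts (GG n (T1 n)). tau n D v = t}"
        using v hh_verts[OF assms(1,2)] hh_tau[OF assms(3,4)] by auto
      then show "v \<in> hh a ` {v \<in> verts (GG n (T1 n)). tau n D v = t}"
        using hh_hh by (metis imageI)
    qed
  next
    show "hh a ` {v \<in> verts (GG n (T1 n)). tau n D v = t} \<subseteq> {v \<in> verts (GG n (T2 n a)). tau n D v = t}"
      using hh_verts[OF assms(1,2)] hh_tau[OF assms(3,4)] hh_hh by auto
  qed
  have "inj (hh a)" by (metis hh_hh injI)
  then show ?thesis unfolding e by (simp add: card_image inj_on_subset)
qed

lemma nbr_out:
  assumes T: "T \<in> {T1 n, T2 n a}" and a: "D \<le> a" "a + 2 + D < n"
    and i: "D \<le> i" "i + D < n" and t: "t \<noteq> (1, Mid, Mid)"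
  shows "{j. (i, j) \<in> edges (LG n T) \<and> tau n D (N2 (i, j)) = t} = {j. j < n \<and> n \<le> j + D \<and> (1, Mid, cl n D j) = t}"
proof -
  have ci: "cl n D i = Mid" using i by (simp add: cl_mid)
  have "(i, j) \<in> T \<and> (1, Mid, cl n D j) = t \<longleftrightarrow> j < n \<and> n \<le> j + D \<and> (1, Mid, cl n D j) = t" for j
  proof
    assume h: "(i, j) \<in> T \<and> (1, Mid, cl n D j) = t"
    then have "cl n D j \<noteq> Mid" using t by auto
    then have nm: "j < D \<or> n \<le> j + D" by (auto simp: cl_mid)
    have o: "i < j \<or> (i = a + 2 \<and> j = a)" using T_ord[OF T] h by blast
    have "j < n" using T_bnd[OF T] h a by force
    then show "j < n \<and> n \<le> j + D \<and> (1, Mid, cl n D j) = t" using nm o h i a by auto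
  next
    assume h: "j < n \<and> n \<le> j + D \<and> (1, Mid, cl n D j) = t"
    have "(i, j) \<in> T" using h i a by (intro T_in[OF T]) auto
    then show "(i, j) \<in> T \<and> (1, Mid, cl n D j) = t" using h by simp
  qed
  then show ?thesis using ci by simp
qed

lemma nbr_in:
  assumes T: "T \<in> {T1 n, T2 n a}" and a: "D < a" "a + 2 + D < n"
    and i: "D \<le> i" "i + D < n" and t: "t \<noteq> (2, Mid, Mid)"
  shows "{j. (j, i) \<in> edges (LG n T) \<and> tau n D (N3 (j, i)) = t} = {j. j < D \<and> (2, cl n D j, Mid) = t}"
proof -
  have ci: "cl n D i = Mid" using i by (simp add: cl_mid)
  have "(j, i) \<in> T \<and> (2, cl n D j, Mid) = t \<longleftrightarrow> j < D \<and> (2, cl n D j, Mid) = t" for j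
  proof
    assume h: "(j, i) \<in> T \<and> (2, cl n D j, Mid) = t"
    then have "cl n D j \<noteq> Mid" using t by auto
    then have nm: "j < D \<or> n \<le> j + D" by (auto simp: cl_mid)
    have o: "j < i \<or> (j = a + 2 \<and> i = a)" using T_ord[OF T] h by blast
    then show "j < D \<and> (2, cl n D j, Mid) = t" using nm h i a by auto
  next
    assume h: "j < D \<and> (2, cl n D j, Mid) = t"
    have "(j, i) \<in> T" using h i a by (intro T_in[OF T]) auto
    then show "(j, i) \<in> T \<and> (2, cl n D j, Mid) = t" using h by simp
  qed
  then show ?thesis using ci by simp
qed

lemma nonbig:
  assumes T: "T \<in> {T1 n, T2 n a}" and a: "D < a" "a + 2 + D < n"
    and i: "D \<le> i" "i + D < n" and t: "t \<noteq> (1, Mid, Mid)" "t \<noteq> (2, Mid, Mid)"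
  shows "card {v. (N1 i, v) \<in> edges (GG n T) \<and> tau n D v = t} =
     card {j. j < n \<and> n \<le> j + D \<and> (1, Mid, cl n D j) = t} + card {j. j < D \<and> (2, cl n D j, Mid) = t}"
proof -
  have "finite (edges (LG n T))" using T_fin[OF T] a by simp
  from gad_nbr_N1_card[OF this, of i "\<lambda>v. tau n D v = t"]
  show ?thesis using nbr_out[OF T _ a(2) i t(1)] nbr_in[OF T a i t(2)] a by simp
qed

lemma big1:
  assumes T: "T \<in> {T1 n, T2 n a}" and p: "K + 3 \<le> B" "D + B \<le> a" "a + 2 + D + B < n"
    and i: "D + B \<le> i" "i + D + B < n"
  shows "K \<le> card {v. (N1 i, v) \<in> edges (GG n T) \<and> tau n D v = (1, Mid, Mid)}"
proof -
  have sub: "(\<lambda>j. N2 (i, j)) ` {i + 3..<i + B} \<subseteq> {v. (N1 i, v) \<in> edges (GG n T) \<and> tau n D v = (1, Mid, Mid)}"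
  proof
    fix v assume "v \<in> (\<lambda>j. N2 (i, j)) ` {i + 3..<i + B}"
    then obtain j where j: "v = N2 (i, j)" "i + 3 \<le> j" "j < i + B" by auto
    have "(i, j) \<in> T" using j i p by (intro T_in[OF T]) auto
    moreover have "cl n D i = Mid" "cl n D j = Mid" using i j p by (auto simp: cl_mid)
    ultimately show "v \<in> {v. (N1 i, v) \<in> edges (GG n T) \<and> tau n D v = (1, Mid, Mid)}"
      using j by (simp add: gad_edges)
  qed
  have "card ((\<lambda>j. N2 (i, j)) ` {i + 3..<i + B}) = B - 3" by (simp add: card_image inj_on_def)
  moreover have "card ((\<lambda>j. N2 (i, j)) ` {i + 3..<i + B}) \<le> card {v. (N1 i, v) \<in> edges (GG n T) \<and> tau n D v = (1, Mid, Mid)}"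
    by (rule card_mono[OF fin_nbr[OF T] sub]) (use p in simp)
  ultimately show ?thesis using p by simp
qed

lemma big2:
  assumes T: "T \<in> {T1 n, T2 n a}" and p: "K + 3 \<le> B" "D + B \<le> a" "a + 2 + D + B < n"
    and i: "D + B \<le> i" "i + D + B < n"
  shows "K \<le> card {v. (N1 i, v) \<in> edges (GG n T) \<and> tau n D v = (2, Mid, Mid)}"
proof -
  have sub: "(\<lambda>j. N3 (j, i)) ` {i - B..<i - 2} \<subseteq> {v. (N1 i, v) \<in> edges (GG n T) \<and> tau n D v = (2, Mid, Mid)}"
  proof
    fix v assume "v \<in> (\<lambda>j. N3 (j, i)) ` {i - B..<i - 2}"
    then obtain j where j: "v = N3 (j, i)" "i - B \<le> j" "j < i - 2" by auto
    have "(j, i) \<in> T" using j i p by (intro T_in[OF T]) auto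
    moreover have "cl n D i = Mid" "cl n D j = Mid" using i j p by (auto simp: cl_mid)
    ultimately show "v \<in> {v. (N1 i, v) \<in> edges (GG n T) \<and> tau n D v = (2, Mid, Mid)}"
      using j by (simp add: gad_edges)
  qed
  have "card ((\<lambda>j. N3 (j, i)) ` {i - B..<i - 2}) = B - 2" using i p by (simp add: card_image inj_on_def)
  moreover have "card ((\<lambda>j. N3 (j, i)) ` {i - B..<i - 2}) \<le> card {v. (N1 i, v) \<in> edges (GG n T) \<and> tau n D v = (2, Mid, Mid)}"
    by (rule card_mono[OF fin_nbr[OF T] sub]) (use p in simp)
  ultimately show ?thesis using p by simp
qed

lemma big3:
  assumes T: "T \<in> {T1 n, T2 n a}" and p: "K + 3 \<le> B" "D + B \<le> a" "a + 2 + D + B < n"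
    and i: "D + B \<le> i" "i + D + B < n"
  shows "K \<le> card (Cls (GG n T) (tau n D) (N1 i) (1, Mid, Mid) 2)"
proof -
  have sub: "(\<lambda>w. N2 (D, w)) ` {D + 1..<D + B} \<subseteq> Cls (GG n T) (tau n D) (N1 i) (1, Mid, Mid) 2"
  proof
    fix v assume "v \<in> (\<lambda>w. N2 (D, w)) ` {D + 1..<D + B}"
    then obtain w where w: "v = N2 (D, w)" "D + 1 \<le> w" "w < D + B" by auto
    have e: "(D, w) \<in> T" using w i p by (intro T_in[OF T]) auto
    moreover have "cl n D D = Mid" "cl n D w = Mid" using i w p by (auto simp: cl_mid)
    ultimately show "v \<in> Cls (GG n T) (tau n D) (N1 i) (1, Mid, Mid) 2"
      using w i by (simp add: gad_edges gad_verts Cls_def rk_def)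
  qed
  have "card ((\<lambda>w. N2 (D, w)) ` {D + 1..<D + B}) = B - 1" by (simp add: card_image inj_on_def)
  moreover have "card ((\<lambda>w. N2 (D, w)) ` {D + 1..<D + B}) \<le> card (Cls (GG n T) (tau n D) (N1 i) (1, Mid, Mid) 2)"
    by (rule card_mono[OF _ sub]) (use GG_fin[OF T] p in \<open>simp add: Cls_def\<close>)
  ultimately show ?thesis using p by simp
qed

lemma big4:
  assumes T: "T \<in> {T1 n, T2 n a}" and p: "K + 3 \<le> B" "D + B \<le> a" "a + 2 + D + B < n"
    and i: "D + B \<le> i" "i + D + B < n"
  shows "K \<le> card (Cls (GG n T) (tau n D) (N1 i) (2, Mid, Mid) 2)"
proof -
  have sub: "(\<lambda>w. N3 (D, w)) ` {D + 1..<D + B} \<subseteq> Cls (GG n T) (tau n D) (N1 i) (2, Mid, Mid) 2"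
  proof
    fix v assume "v \<in> (\<lambda>w. N3 (D, w)) ` {D + 1..<D + B}"
    then obtain w where w: "v = N3 (D, w)" "D + 1 \<le> w" "w < D + B" by auto
    have e: "(D, w) \<in> T" using w i p by (intro T_in[OF T]) auto
    moreover have "cl n D D = Mid" "cl n D w = Mid" using i w p by (auto simp: cl_mid)
    ultimately show "v \<in> Cls (GG n T) (tau n D) (N1 i) (2, Mid, Mid) 2"
      using w i by (simp add: gad_edges gad_verts Cls_def rk_def)
  qed
  have "card ((\<lambda>w. N3 (D, w)) ` {D + 1..<D + B}) = B - 1" by (simp add: card_image inj_on_def)
  moreover have "card ((\<lambda>w. N3 (D, w)) ` {D + 1..<D + B}) \<le> card (Cls (GG n T) (tau n D) (N1 i) (2, Mid, Mid) 2)"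
    by (rule card_mono[OF _ sub]) (use GG_fin[OF T] p in \<open>simp add: Cls_def\<close>)
  ultimately show ?thesis using p by simp
qed


definition bigor :: "nat \<Rightarrow> nat gnode graph \<Rightarrow> nat gnode graph \<Rightarrow> (nat gnode \<Rightarrow> nat \<times> cls \<times> cls) \<Rightarrow> nat gnode \<Rightarrow> nat gnode \<Rightarrow> bool" where
  "bigor K G H \<tau> x x' \<longleftrightarrow> (\<forall>t. card (Cls G \<tau> x t 1) = card (Cls H \<tau> x' t 1) \<or>
        (K \<le> card (Cls G \<tau> x t 1) \<and> K \<le> card (Cls H \<tau> x' t 1) \<and> K \<le> card (Cls G \<tau> x t 2) \<and> K \<le> card (Cls H \<tau> x' t 2)))"

lemma caseN1:
  assumes p: "K + 3 \<le> B" "D + B \<le> a" "a + 2 + D + B < n"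
    and i: "i < n" "i' < n" and c: "cl n (D + B) i = cl n (D + B) i'"
  shows "bigor K (GG n (T1 n)) (GG n (T2 n a)) (tau n D) (N1 i) (N1 i')"
  unfolding bigor_def
proof
  fix t
  have T1: "T1 n \<in> {T1 n, T2 n a}" and T2: "T2 n a \<in> {T1 n, T2 n a}" by simp_all
  show "card (Cls (GG n (T1 n)) (tau n D) (N1 i) t 1) = card (Cls (GG n (T2 n a)) (tau n D) (N1 i') t 1) \<or>
        (K \<le> card (Cls (GG n (T1 n)) (tau n D) (N1 i) t 1) \<and> K \<le> card (Cls (GG n (T2 n a)) (tau n D) (N1 i') t 1) \<and>
         K \<le> card (Cls (GG n (T1 n)) (tau n D) (N1 i) t 2) \<and> K \<le> card (Cls (GG n (T2 n a)) (tau n D) (N1 i') t 2))"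
  proof (cases "cl n (D + B) i = Mid")
    case True
    have True': "cl n (D + B) i' = Mid" using True c by simp
    have mi: "D + B \<le> i" "i + D + B < n" "D + B \<le> i'" "i' + D + B < n"
      using True True' unfolding cl_mid by auto
    show ?thesis
    proof (cases "t = (1, Mid, Mid) \<or> t = (2, Mid, Mid)")
      case True
      then show ?thesis unfolding Cls1_GG
        using big1[OF T1 p mi(1,2)] big2[OF T1 p mi(1,2)] big3[OF T1 p mi(1,2)] big4[OF T1 p mi(1,2)]
          big1[OF T2 p mi(3,4)] big2[OF T2 p mi(3,4)] big3[OF T2 p mi(3,4)] big4[OF T2 p mi(3,4)]
        by (elim disjE) simp_all
    next
      case False
      have a: "D < a" "a + 2 + D < n" using p by auto
      show ?thesis unfolding Cls1_GG
        using nonbig[OF T1 a, of i t] nonbig[OF T2 a, of i' t] False mi by auto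
    qed
  next
    case False
    then have ii: "i' = i" using cl_nonmid_eq[OF i c] by simp
    have "cl n (D + B) a = Mid" "cl n (D + B) (a + 2) = Mid" using p by (auto simp: cl_mid)
    then have ia: "i \<noteq> a" "i \<noteq> a + 2" using False by auto
    have "{v. (N1 i, v) \<in> edges (GG n (T1 n)) \<and> tau n D v = t} = {v. (N1 i, v) \<in> edges (GG n (T2 n a)) \<and> tau n D v = t}"
      unfolding gad_nbr_N1 using ia by (auto simp: T2_def)
    then show ?thesis unfolding Cls1_GG ii by simp
  qed
qed

lemma caseN2:
  assumes p: "K + 3 \<le> B" "D + B \<le> a" "a + 2 + D + B < n"
    and e: "e \<in> T1 n" "e' \<in> T2 n a"
    and c: "cl n (D + B) (fst e) = cl n (D + B) (fst e')" "cl n (D + B) (snd e) = cl n (D + B) (snd e')"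
  shows "bigor K (GG n (T1 n)) (GG n (T2 n a)) (tau n D) (N2 e) (N2 e')"
proof -
  have a: "a + 2 < n" using p by simp
  have b: "fst e < n" "snd e < n" "fst e' < n" "snd e' < n"
    using T_bnd[of "T1 n" n a "fst e" "snd e"] T_bnd[of "T2 n a" n a "fst e'" "snd e'"] e a by auto
  have c': "cl n D (fst e) = cl n D (fst e')" "cl n D (snd e) = cl n D (snd e')"
    using cl_ref[OF b(1) b(3) _ c(1)] cl_ref[OF b(2) b(4) _ c(2)] by auto
  show ?thesis unfolding bigor_def Cls1_GG
  proof (intro allI disjI1)
    fix t
    have s1: "{v. (N2 e, v) \<in> edges (GG n (T1 n)) \<and> tau n D v = t} = {v. v \<in> {N1 (fst e), N3 e} \<and> tau n D v = t}"
      by (rule gad_nbr_N2) (use e in simp)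
    have s2: "{v. (N2 e', v) \<in> edges (GG n (T2 n a)) \<and> tau n D v = t} = {v. v \<in> {N1 (fst e'), N3 e'} \<and> tau n D v = t}"
      by (rule gad_nbr_N2) (use e in simp)
    have k1: "card {v. v \<in> {N1 (fst e), N3 e} \<and> tau n D v = t} = (if tau n D (N1 (fst e)) = t then 1 else 0) + (if tau n D (N3 e) = t then 1 else 0)"
      by (rule card_two) simp
    have k2: "card {v. v \<in> {N1 (fst e'), N3 e'} \<and> tau n D v = t} = (if tau n D (N1 (fst e')) = t then 1 else 0) + (if tau n D (N3 e') = t then 1 else 0)"
      by (rule card_two) simp
    show "card {v. (N2 e, v) \<in> edges (GG n (T1 n)) \<and> tau n D v = t} = card {v. (N2 e', v) \<in> edges (GG n (T2 n a)) \<and> tau n D v = t}"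
      unfolding s1 s2 k1 k2 using c' by simp
  qed
qed

lemma caseN3:
  assumes p: "K + 3 \<le> B" "D + B \<le> a" "a + 2 + D + B < n"
    and e: "e \<in> T1 n" "e' \<in> T2 n a"
    and c: "cl n (D + B) (fst e) = cl n (D + B) (fst e')" "cl n (D + B) (snd e) = cl n (D + B) (snd e')"
  shows "bigor K (GG n (T1 n)) (GG n (T2 n a)) (tau n D) (N3 e) (N3 e')"
proof -
  have a: "a + 2 < n" using p by simp
  have b: "fst e < n" "snd e < n" "fst e' < n" "snd e' < n"
    using T_bnd[of "T1 n" n a "fst e" "snd e"] T_bnd[of "T2 n a" n a "fst e'" "snd e'"] e a by auto
  have c': "cl n D (fst e) = cl n D (fst e')" "cl n D (snd e) = cl n D (snd e')"
    using cl_ref[OF b(1) b(3) _ c(1)] cl_ref[OF b(2) b(4) _ c(2)] by auto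
  show ?thesis unfolding bigor_def Cls1_GG
  proof (intro allI disjI1)
    fix t
    have s1: "{v. (N3 e, v) \<in> edges (GG n (T1 n)) \<and> tau n D v = t} = {v. v \<in> {N2 e, N1 (snd e)} \<and> tau n D v = t}"
      by (rule gad_nbr_N3) (use e in simp)
    have s2: "{v. (N3 e', v) \<in> edges (GG n (T2 n a)) \<and> tau n D v = t} = {v. v \<in> {N2 e', N1 (snd e')} \<and> tau n D v = t}"
      by (rule gad_nbr_N3) (use e in simp)
    have k1: "card {v. v \<in> {N2 e, N1 (snd e)} \<and> tau n D v = t} = (if tau n D (N2 e) = t then 1 else 0) + (if tau n D (N1 (snd e)) = t then 1 else 0)"
      by (rule card_two) simp
    have k2: "card {v. v \<in> {N2 e', N1 (snd e')} \<and> tau n D v = t} = (if tau n D (N2 e') = t then 1 else 0) + (if tau n D (N1 (snd e')) = t then 1 else 0)"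
      by (rule card_two) simp
    show "card {v. (N3 e, v) \<in> edges (GG n (T1 n)) \<and> tau n D v = t} = card {v. (N3 e', v) \<in> edges (GG n (T2 n a)) \<and> tau n D v = t}"
      unfolding s1 s2 k1 k2 using c' by simp
  qed
qed


lemma vb:
  assumes "T \<in> {T1 n, T2 n a}" "0 < a" "a + 3 < n" "v \<in> verts (GG n T)"
  shows "case v of N1 i \<Rightarrow> i < n | N2 e \<Rightarrow> fst e < n \<and> snd e < n | N3 e \<Rightarrow> fst e < n \<and> snd e < n"
proof (cases v)
  case (N1 i) then show ?thesis using N1_verts[OF assms(1-3)] assms(4) by simp
next
  case (N2 e) then show ?thesis using T_bnd[OF assms(1), of "fst e" "snd e"] assms by (simp add: gad_verts)
next
  case (N3 e) then show ?thesis using T_bnd[OF assms(1), of "fst e" "snd e"] assms by (simp add: gad_verts)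
qed

lemma bigor_all:
  assumes p: "K + 3 \<le> B" "D + B \<le> a" "a + 2 + D + B < n"
    and x: "x \<in> verts (GG n (T1 n))" "x' \<in> verts (GG n (T2 n a))" "tau n (D + B) x = tau n (D + B) x'"
  shows "bigor K (GG n (T1 n)) (GG n (T2 n a)) (tau n D) x x'"
proof -
  have a: "0 < a" "a + 3 < n" using p by auto
  have b1: "case x of N1 i \<Rightarrow> i < n | N2 e \<Rightarrow> fst e < n \<and> snd e < n | N3 e \<Rightarrow> fst e < n \<and> snd e < n"
    by (rule vb[OF _ a x(1)]) simp
  have b2: "case x' of N1 i \<Rightarrow> i < n | N2 e \<Rightarrow> fst e < n \<and> snd e < n | N3 e \<Rightarrow> fst e < n \<and> snd e < n"
    by (rule vb[OF _ a x(2)]) simp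
  show ?thesis
  proof (cases x)
    case (N1 i)
    then obtain i' where x': "x' = N1 i'" using x(3) by (cases x') auto
    show ?thesis unfolding N1 x' by (rule caseN1[OF p]) (use b1 b2 x(3) N1 x' in auto)
  next
    case (N2 e)
    then obtain e' where x': "x' = N2 e'" using x(3) by (cases x') auto
    show ?thesis unfolding N2 x' by (rule caseN2[OF p]) (use x N2 x' in \<open>auto simp: gad_verts\<close>)
  next
    case (N3 e)
    then obtain e' where x': "x' = N3 e'" using x(3) by (cases x') auto
    show ?thesis unfolding N3 x' by (rule caseN3[OF p]) (use x N3 x' in \<open>auto simp: gad_verts\<close>)
  qed
qed

lemma tau_ref:
  assumes a: "0 < a" "a + 3 < n" and dd: "D \<le> D'"
    and x: "x \<in> verts (GG n (T1 n))" "x' \<in> verts (GG n (T2 n a))" "tau n D' x = tau n D' x'"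
  shows "tau n D x = tau n D x'"
proof -
  have b1: "case x of N1 i \<Rightarrow> i < n | N2 e \<Rightarrow> fst e < n \<and> snd e < n | N3 e \<Rightarrow> fst e < n \<and> snd e < n"
    by (rule vb[OF _ a x(1)]) simp
  have b2: "case x' of N1 i \<Rightarrow> i < n | N2 e \<Rightarrow> fst e < n \<and> snd e < n | N3 e \<Rightarrow> fst e < n \<and> snd e < n"
    by (rule vb[OF _ a x(2)]) simp
  have key: "\<And>i j. i < n \<Longrightarrow> j < n \<Longrightarrow> cl n D' i = cl n D' j \<Longrightarrow> cl n D i = cl n D j"
    using cl_ref dd by blast
  show ?thesis
  proof (cases x)
    case (N1 i)
    then obtain i' where x': "x' = N1 i'" using x(3) by (cases x') auto
    have "i < n" "i' < n" "cl n D' i = cl n D' i'" using N1 x' b1 b2 x(3) by auto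
    then have "cl n D i = cl n D i'" by (rule key)
    then show ?thesis using N1 x' by simp
  next
    case (N2 e)
    then obtain e' where x': "x' = N2 e'" using x(3) by (cases x') auto
    have "fst e < n" "fst e' < n" "cl n D' (fst e) = cl n D' (fst e')"
      "snd e < n" "snd e' < n" "cl n D' (snd e) = cl n D' (snd e')" using N2 x' b1 b2 x(3) by auto
    then have "cl n D (fst e) = cl n D (fst e')" "cl n D (snd e) = cl n D (snd e')" by (blast intro: key)+
    then show ?thesis using N2 x' by simp
  next
    case (N3 e)
    then obtain e' where x': "x' = N3 e'" using x(3) by (cases x') auto
    have "fst e < n" "fst e' < n" "cl n D' (fst e) = cl n D' (fst e')"
      "snd e < n" "snd e' < n" "cl n D' (snd e) = cl n D' (snd e')" using N3 x' b1 b2 x(3) by auto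
    then have "cl n D (fst e) = cl n D (fst e')" "cl n D (snd e) = cl n D (snd e')" by (blast intro: key)+
    then show ?thesis using N3 x' by simp
  qed
qed

definition Rn :: "nat \<Rightarrow> nat \<Rightarrow> nat \<Rightarrow> nat \<Rightarrow> nat gnode \<Rightarrow> nat gnode \<Rightarrow> bool" where
  "Rn n a B m x y \<longleftrightarrow> x \<in> verts (GG n (T1 n)) \<and> y \<in> verts (GG n (T2 n a)) \<and> tau n (Suc m * B) x = tau n (Suc m * B) y"

lemma fwd12:
  assumes p: "K + 3 \<le> B" "Suc M * B \<le> a" "a + 2 + Suc M * B < n" and m: "Suc m \<le> M"
  shows "fwd K (GG n (T1 n)) (GG n (T2 n a)) (Rn n a B (Suc m)) (Rn n a B m)"
    and "fwd K (GG n (T2 n a)) (GG n (T1 n)) (\<lambda>y x. Rn n a B (Suc m) x y) (\<lambda>y x. Rn n a B m x y)"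
proof -
  define D where "D = Suc m * B"
  have DB: "Suc (Suc m) * B = D + B" unfolding D_def by simp
  have "Suc (Suc m) * B \<le> Suc M * B" using m by (intro mult_le_mono1) simp
  then have pD: "K + 3 \<le> B" "D + B \<le> a" "a + 2 + D + B < n" using p DB by auto
  have a: "0 < a" "a + 3 < n" "a + 2 < n" "D \<le> a" "a + 2 + D < n" using pD by auto
  have fin: "finite (verts (GG n (T1 n)))" "finite (verts (GG n (T2 n a)))"
    by (rule GG_fin[of _ n a], simp, rule a)+
  have irr: "\<forall>v. (v, v) \<notin> edges (GG n (T1 n))" "\<forall>v. (v, v) \<notin> edges (GG n (T2 n a))"
    by (simp_all add: gad_irr)
  have cnt: "\<forall>t r. min K (card (Cls (GG n (T1 n)) (tau n D) x t r)) = min K (card (Cls (GG n (T2 n a)) (tau n D) x' t r))"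
    if x: "x \<in> verts (GG n (T1 n))" "x' \<in> verts (GG n (T2 n a))" "tau n (D + B) x = tau n (D + B) x'" for x x'
  proof (rule combine[OF fin x(1,2)])
    show "tau n D x = tau n D x'" by (rule tau_ref[OF a(1,2) _ x]) simp
    show "\<forall>t. card {v \<in> verts (GG n (T1 n)). tau n D v = t} = card {v \<in> verts (GG n (T2 n a)). tau n D v = t}"
      using tot[OF a(1,2,4,5)] by blast
    show "\<forall>t. card (Cls (GG n (T1 n)) (tau n D) x t 1) = card (Cls (GG n (T2 n a)) (tau n D) x' t 1) \<or>
        (K \<le> card (Cls (GG n (T1 n)) (tau n D) x t 1) \<and> K \<le> card (Cls (GG n (T2 n a)) (tau n D) x' t 1) \<and>
         K \<le> card (Cls (GG n (T1 n)) (tau n D) x t 2) \<and> K \<le> card (Cls (GG n (T2 n a)) (tau n D) x' t 2))"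
      using bigor_all[OF pD x] unfolding bigor_def .
  qed
  show "fwd K (GG n (T1 n)) (GG n (T2 n a)) (Rn n a B (Suc m)) (Rn n a B m)"
    unfolding fwd_def
  proof (intro allI impI)
    fix x x' A
    assume r: "Rn n a B (Suc m) x x'" and x: "x \<in> verts (GG n (T1 n))" "x' \<in> verts (GG n (T2 n a))"
      and A: "A \<subseteq> verts (GG n (T1 n))" "card A \<le> K"
    have tx: "tau n (D + B) x = tau n (D + B) x'" using r DB unfolding Rn_def by (simp add: add.commute)
    obtain g where g: "inj_on g A" "g ` A \<subseteq> verts (GG n (T2 n a))"
      "\<forall>v\<in>A. tau n D (g v) = tau n D v \<and> (v = x \<longleftrightarrow> g v = x') \<and> ((x, v) \<in> edges (GG n (T1 n)) \<longleftrightarrow> (x', g v) \<in> edges (GG n (T2 n a)))"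
      using count_fwd2[OF fin irr cnt[OF x tx] A] by blast
    show "\<exists>g. inj_on g A \<and> g ` A \<subseteq> verts (GG n (T2 n a)) \<and> (\<forall>v\<in>A. Rn n a B m v (g v) \<and> (v = x \<longleftrightarrow> g v = x') \<and>
         ((x, v) \<in> edges (GG n (T1 n)) \<longleftrightarrow> (x', g v) \<in> edges (GG n (T2 n a))))"
      using g A unfolding Rn_def D_def by (intro exI[of _ g]) auto
  qed
  show "fwd K (GG n (T2 n a)) (GG n (T1 n)) (\<lambda>y x. Rn n a B (Suc m) x y) (\<lambda>y x. Rn n a B m x y)"
    unfolding fwd_def
  proof (intro allI impI)
    fix x' x A
    assume r: "Rn n a B (Suc m) x x'" and x: "x' \<in> verts (GG n (T2 n a))" "x \<in> verts (GG n (T1 n))"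
      and A: "A \<subseteq> verts (GG n (T2 n a))" "card A \<le> K"
    have tx: "tau n (D + B) x = tau n (D + B) x'" using r DB unfolding Rn_def by (simp add: add.commute)
    have cnt': "\<forall>t r. min K (card (Cls (GG n (T2 n a)) (tau n D) x' t r)) = min K (card (Cls (GG n (T1 n)) (tau n D) x t r))"
      using cnt[OF x(2) x(1) tx] by simp
    obtain g where g: "inj_on g A" "g ` A \<subseteq> verts (GG n (T1 n))"
      "\<forall>v\<in>A. tau n D (g v) = tau n D v \<and> (v = x' \<longleftrightarrow> g v = x) \<and> ((x', v) \<in> edges (GG n (T2 n a)) \<longleftrightarrow> (x, g v) \<in> edges (GG n (T1 n)))"
      using count_fwd2[OF fin(2) fin(1) irr(2) irr(1) cnt' A] by blast
    show "\<exists>g. inj_on g A \<and> g ` A \<subseteq> verts (GG n (T1 n)) \<and> (\<forall>v\<in>A. Rn n a B m (g v) v \<and> (v = x' \<longleftrightarrow> g v = x) \<and>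
         ((x', v) \<in> edges (GG n (T2 n a)) \<longleftrightarrow> (x, g v) \<in> edges (GG n (T1 n))))"
      using g A unfolding Rn_def D_def by (intro exI[of _ g]) auto
  qed
qed

lemma tau_lab: "tau n D x = tau n D y \<Longrightarrow> lab (gad G) x = lab (gad H) y"
  by (cases x; cases y) (auto simp: gad_lab fun_eq_iff)

lemma sat12:
  assumes p: "K + 3 \<le> B" "Suc M * B \<le> a" "a + 2 + Suc M * B < n"
    and phi: "depth \<phi> \<le> M" "maxk \<phi> \<le> K"
  shows "sat (GG n (T1 n)) \<phi> (\<lambda>_. N1 0) = sat (GG n (T2 n a)) \<phi> (\<lambda>_. N1 0)"
proof -
  have "B \<le> Suc M * B" by simp
  then have a: "0 < a" "a + 3 < n" "a + 2 < n" using p by auto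
  have fin: "finite (verts (GG n (T1 n)))" "finite (verts (GG n (T2 n a)))"
    by (rule GG_fin[of _ n a], simp, rule a)+
  have irr: "\<forall>v. (v, v) \<notin> edges (GG n (T1 n))" "\<forall>v. (v, v) \<notin> edges (GG n (T2 n a))"
    by (simp_all add: gad_irr)
  have lab: "\<forall>m x x'. Rn n a B m x x' \<longrightarrow> lab (GG n (T1 n)) x = lab (GG n (T2 n a)) x'"
    unfolding Rn_def using tau_lab by blast
  have down: "\<forall>m x x'. Rn n a B (Suc m) x x' \<longrightarrow> Rn n a B m x x'"
  proof (intro allI impI)
    fix m x x' assume r: "Rn n a B (Suc m) x x'"
    have "tau n (Suc m * B) x = tau n (Suc m * B) x'"
      by (rule tau_ref[OF a(1,2), of _ "Suc (Suc m) * B"]) (use r in \<open>auto simp: Rn_def\<close>)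
    then show "Rn n a B m x x'" using r unfolding Rn_def by simp
  qed
  have F: "\<forall>m. Suc m \<le> M \<longrightarrow> fwd K (GG n (T1 n)) (GG n (T2 n a)) (Rn n a B (Suc m)) (Rn n a B m)"
    using fwd12(1)[OF p] by blast
  have Bk: "\<forall>m. Suc m \<le> M \<longrightarrow> fwd K (GG n (T2 n a)) (GG n (T1 n)) (\<lambda>y x. Rn n a B (Suc m) x y) (\<lambda>y x. Rn n a B m x y)"
    using fwd12(2)[OF p] by blast
  have v0: "N1 0 \<in> verts (GG n (T1 n))" "N1 0 \<in> verts (GG n (T2 n a))"
    using N1_verts[of "T1 n" n a 0] N1_verts[of "T2 n a" n a 0] a by auto
  have ar: "AR (GG n (T1 n)) (GG n (T2 n a)) (Rn n a B M) (\<lambda>_. N1 0) (\<lambda>_. N1 0)"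
    unfolding AR_def Rn_def using v0 irr by auto
  show ?thesis
    by (rule invariance[OF fin irr gad_sym gad_sym lab down F Bk phi(1) order_refl phi(2) ar])
qed

definition ren :: "('a \<Rightarrow> nat) \<Rightarrow> 'a graph \<Rightarrow> nat graph" where
  "ren f G = \<lparr>verts = f ` verts G, edges = (\<lambda>(u, w). (f u, f w)) ` edges G,
      lab = (\<lambda>v. lab G (inv_into (verts G) f v))\<rparr>"

lemma ren_simps[simp]:
  "verts (ren f G) = f ` verts G" "edges (ren f G) = (\<lambda>(u, w). (f u, f w)) ` edges G"
  "lab (ren f G) v = lab G (inv_into (verts G) f v)"
  by (simp_all add: ren_def)

lemma ren_edge:
  assumes "inj_on f (verts G)" "edges G \<subseteq> verts G \<times> verts G" "u \<in> verts G" "w \<in> verts G"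
  shows "(f u, f w) \<in> edges (ren f G) \<longleftrightarrow> (u, w) \<in> edges G"
proof
  assume "(f u, f w) \<in> edges (ren f G)"
  then obtain u' w' where e: "(u', w') \<in> edges G" "f u' = f u" "f w' = f w" by auto
  then have "u' = u" "w' = w" using assms inj_onD[OF assms(1)] by blast+
  then show "(u, w) \<in> edges G" using e by simp
qed force

lemma ren_ugraph:
  assumes "inj_on f (verts G)" "ugraph G"
  shows "ugraph (ren f G)"
proof -
  have d: "finite (verts G)" "edges G \<subseteq> verts G \<times> verts G" "\<forall>v. (v, v) \<notin> edges G" "sym (edges G)"
    using assms(2) unfolding ugraph_def dgraph_def by auto
  have irr: "(v, v) \<notin> edges (ren f G)" for v
  proof
    assume "(v, v) \<in> edges (ren f G)"
    then obtain u w where e: "(u, w) \<in> edges G" "f u = v" "f w = v" by auto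
    then have "u = w" using d(2) inj_onD[OF assms(1)] by blast
    then show False using e d(3) by simp
  qed
  have "sym (edges (ren f G))" using d(4) unfolding sym_def by auto
  then show ?thesis unfolding ugraph_def dgraph_def using d irr by auto
qed

lemma ren_iso:
  assumes "inj_on f (verts G)" "edges G \<subseteq> verts G \<times> verts G"
  shows "graph_iso d (ren f G) G"
  unfolding graph_iso_def
proof (intro exI[of _ "inv_into (verts G) f"] conjI ballI allI impI)
  show "bij_betw (inv_into (verts G) f) (verts (ren f G)) (verts G)"
    using bij_betw_inv_into[OF inj_on_imp_bij_betw[OF assms(1)]] by simp
next
  fix u w assume uw: "u \<in> verts (ren f G)" "w \<in> verts (ren f G)"
  then obtain u' w' where u': "u' \<in> verts G" "u = f u'" "w' \<in> verts G" "w = f w'" by auto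
  show "((u, w) \<in> edges (ren f G)) = ((inv_into (verts G) f u, inv_into (verts G) f w) \<in> edges G)"
    using ren_edge[OF assms u'(1,3)] u' assms(1) by simp
next
  fix v i show "lab (ren f G) v i = lab G (inv_into (verts G) f v) i" by simp
qed

lemma ren_sat:
  assumes inj: "inj_on f (verts G)" and ug: "ugraph G" and v: "v \<in> verts G"
  shows "sat G \<phi> (\<lambda>_. v) = sat (ren f G) \<phi> (\<lambda>_. f v)"
proof -
  have d: "finite (verts G)" "edges G \<subseteq> verts G \<times> verts G" "\<forall>v. (v, v) \<notin> edges G" "sym (edges G)"
    using ug unfolding ugraph_def dgraph_def by auto
  have d2: "finite (verts (ren f G))" "\<forall>v. (v, v) \<notin> edges (ren f G)" "sym (edges (ren f G))"
    using ren_ugraph[OF inj ug] unfolding ugraph_def dgraph_def by auto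
  define R where "R = (\<lambda>(m::nat) x y. x \<in> verts G \<and> y = f x)"
  have lab: "\<forall>m x x'. R m x x' \<longrightarrow> lab G x = lab (ren f G) x'"
    unfolding R_def using inj by (auto simp: fun_eq_iff)
  have down: "\<forall>m x x'. R (Suc m) x x' \<longrightarrow> R m x x'" unfolding R_def by simp
  have F: "\<forall>m. Suc m \<le> depth \<phi> \<longrightarrow> fwd (maxk \<phi>) G (ren f G) (R (Suc m)) (R m)"
    unfolding fwd_def
  proof (intro allI impI)
    fix m x x' A assume "Suc m \<le> depth \<phi>" and h0: "R (Suc m) x x'" "x \<in> verts G" "x' \<in> verts (ren f G)"
      and h1: "A \<subseteq> verts G" "card A \<le> maxk \<phi>"
    have h: "x \<in> verts G \<and> x' = f x" "A \<subseteq> verts G" using h0 h1 unfolding R_def by auto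
    show "\<exists>g. inj_on g A \<and> g ` A \<subseteq> verts (ren f G) \<and> (\<forall>v\<in>A. R m v (g v) \<and> (v = x \<longleftrightarrow> g v = x') \<and>
           ((x, v) \<in> edges G \<longleftrightarrow> (x', g v) \<in> edges (ren f G)))"
    proof (intro exI[of _ f] conjI ballI)
      show "inj_on f A" using inj h inj_on_subset by blast
      show "f ` A \<subseteq> verts (ren f G)" using h by auto
      fix v assume "v \<in> A"
      then have vv: "v \<in> verts G" using h by auto
      show "R m v (f v)" using vv unfolding R_def by simp
      show "(v = x) = (f v = x')" using h vv inj by (auto dest: inj_onD)
      show "((x, v) \<in> edges G) = ((x', f v) \<in> edges (ren f G))" using ren_edge[OF inj d(2)] h vv by simp
    qed
  qed
  have B: "\<forall>m. Suc m \<le> depth \<phi> \<longrightarrow> fwd (maxk \<phi>) (ren f G) G (\<lambda>y x. R (Suc m) x y) (\<lambda>y x. R m x y)"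
    unfolding fwd_def
  proof (intro allI impI)
    fix m x' x A assume "Suc m \<le> depth \<phi>" and h0: "R (Suc m) x x'" "x' \<in> verts (ren f G)" "x \<in> verts G"
      and h1: "A \<subseteq> verts (ren f G)" "card A \<le> maxk \<phi>"
    have h: "x \<in> verts G \<and> x' = f x" "A \<subseteq> verts (ren f G)" using h0 h1 unfolding R_def by auto
    let ?g = "inv_into (verts G) f"
    show "\<exists>g. inj_on g A \<and> g ` A \<subseteq> verts G \<and> (\<forall>v\<in>A. R m (g v) v \<and> (v = x' \<longleftrightarrow> g v = x) \<and>
           ((x', v) \<in> edges (ren f G) \<longleftrightarrow> (x, g v) \<in> edges G))"
    proof (intro exI[of _ ?g] conjI ballI)
      show "inj_on ?g A" using h by (intro inj_on_inv_into) auto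
      show "?g ` A \<subseteq> verts G" using h by (auto intro: inv_into_into)
      fix v assume "v \<in> A"
      then obtain w where w: "w \<in> verts G" "v = f w" using h by auto
      have gw: "?g v = w" using w inj by simp
      show "R m (?g v) v" using gw w unfolding R_def by simp
      show "(v = x') = (?g v = x)" using gw w h inj by (auto dest: inj_onD)
      show "((x', v) \<in> edges (ren f G)) = ((x, ?g v) \<in> edges G)" using ren_edge[OF inj d(2)] h w gw by simp
    qed
  qed
  have ar: "AR G (ren f G) (R (depth \<phi>)) (\<lambda>_. v) (\<lambda>_. f v)"
    unfolding AR_def R_def using v d(3) d2(2) by auto
  show ?thesis
    by (rule invariance[OF d(1) d2(1) d(3) d2(2) d(4) d2(3) lab down F B order_refl order_refl order_refl ar])
qed


definition enc :: "nat gnode \<Rightarrow> nat" where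
  "enc v = (case v of N1 u \<Rightarrow> 3 * u | N2 e \<Rightarrow> 3 * prod_encode e + 1 | N3 e \<Rightarrow> 3 * prod_encode e + 2)"

lemma inj_enc: "inj enc"
proof (rule injI)
  fix x y assume h: "enc x = enc y"
  show "x = y"
    using h by (cases x; cases y) (auto simp: enc_def, presburger+)
qed

lemma gad_ugraph: "finite (edges G) \<Longrightarrow> ugraph (gad G)"
  unfolding ugraph_def dgraph_def using gad_fin gad_sub gad_irr gad_sym by blast

lemma path_transfer:
  assumes f: "bij_betw f (verts H) (verts (gad G))"
    "\<forall>u\<in>verts H. \<forall>w\<in>verts H. (u, w) \<in> edges H \<longleftrightarrow> (f u, f w) \<in> edges (gad G)"
    "\<forall>v\<in>verts H. \<forall>i<3. lab H v i = lab (gad G) (f v) i"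
    and V: "p \<in> verts H" "s \<in> verts H" "t \<in> verts H" "q \<in> verts H"
    and E: "(p, s) \<in> edges H" "(s, t) \<in> edges H" "(t, q) \<in> edges H"
    and L: "lab H p 0" "lab H s 1" "lab H t 2" "lab H q 0"
  shows "\<exists>p' q'. f p = N1 p' \<and> f q = N1 q' \<and> (p', q') \<in> edges G"
proof -
  have l: "lab (gad G) (f p) 0" "lab (gad G) (f s) 1" "lab (gad G) (f t) 2" "lab (gad G) (f q) 0"
    using f(3) V L by auto
  obtain p' where p': "f p = N1 p'" using l(1) by (cases "f p") (auto simp: gad_lab)
  obtain q' where q': "f q = N1 q'" using l(4) by (cases "f q") (auto simp: gad_lab)
  obtain e1 where e1: "f s = N2 e1" using l(2) by (cases "f s") (auto simp: gad_lab)
  obtain e2 where e2: "f t = N3 e2" using l(3) by (cases "f t") (auto simp: gad_lab)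
  have "(N1 p', N2 e1) \<in> edges (gad G)" "(N2 e1, N3 e2) \<in> edges (gad G)" "(N3 e2, N1 q') \<in> edges (gad G)"
    using f(2) V E p' q' e1 e2 by force+
  then have "e1 \<in> edges G" "fst e1 = p'" "e2 = e1" "snd e2 = q'" by (auto simp: gad_edges)
  then have "(p', q') \<in> edges G" by (metis prod.collapse)
  then show ?thesis using p' q' by blast
qed

lemma ren_path:
  assumes T: "T \<in> {T1 n, T2 n a}" "a + 2 < n" and e: "(p, q) \<in> T"
  shows "enc (N1 p) \<in> verts (ren enc (GG n T)) \<and> enc (N2 (p, q)) \<in> verts (ren enc (GG n T)) \<and>
    enc (N3 (p, q)) \<in> verts (ren enc (GG n T)) \<and> enc (N1 q) \<in> verts (ren enc (GG n T)) \<and>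
    (enc (N1 p), enc (N2 (p, q))) \<in> edges (ren enc (GG n T)) \<and>
    (enc (N2 (p, q)), enc (N3 (p, q))) \<in> edges (ren enc (GG n T)) \<and>
    (enc (N3 (p, q)), enc (N1 q)) \<in> edges (ren enc (GG n T)) \<and>
    lab (ren enc (GG n T)) (enc (N1 p)) 0 \<and> lab (ren enc (GG n T)) (enc (N2 (p, q))) 1 \<and>
    lab (ren enc (GG n T)) (enc (N3 (p, q))) 2 \<and> lab (ren enc (GG n T)) (enc (N1 q)) 0"
proof -
  have inj: "inj_on enc (verts (GG n T))" using inj_enc by (rule inj_on_subset) simp
  have v: "N1 p \<in> verts (GG n T)" "N2 (p, q) \<in> verts (GG n T)" "N3 (p, q) \<in> verts (GG n T)" "N1 q \<in> verts (GG n T)"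
    using e by (auto simp: gad_verts)
  have ed: "(N1 p, N2 (p, q)) \<in> edges (GG n T)" "(N2 (p, q), N3 (p, q)) \<in> edges (GG n T)" "(N3 (p, q), N1 q) \<in> edges (GG n T)"
    using e by (auto simp: gad_edges)
  show ?thesis using v ed inj by (auto simp: gad_lab intro!: imageI[of _ _ "\<lambda>(u, w). (enc u, enc w)", simplified])
qed

lemma T1_lin: "strict_linear_order_on (verts (LG n (T1 n))) (edges (LG n (T1 n)))"
  unfolding strict_linear_order_on_def T1_def
  by (auto simp: trans_def irrefl_def total_on_def)

lemma T1_dgraph: "dgraph (LG n (T1 n))"
  unfolding dgraph_def T1_def by auto


theorem theorem6:
  shows "\<not> (\<exists>\<phi> :: c2. fv \<phi> \<subseteq> {X} \<and>
     (\<forall>(G :: nat graph) v. ugraph G \<longrightarrow> v \<in> verts G \<longrightarrow>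
        (sat G \<phi> (\<lambda>_. v) \<longleftrightarrow>
         (\<exists>G' :: nat graph. dgraph G' \<and> strict_linear_order_on (verts G') (edges G')
              \<and> graph_iso 3 G (gad G')))))"
proof
  assume "\<exists>\<phi> :: c2. fv \<phi> \<subseteq> {X} \<and>
     (\<forall>(G :: nat graph) v. ugraph G \<longrightarrow> v \<in> verts G \<longrightarrow>
        (sat G \<phi> (\<lambda>_. v) \<longleftrightarrow>
         (\<exists>G' :: nat graph. dgraph G' \<and> strict_linear_order_on (verts G') (edges G')
              \<and> graph_iso 3 G (gad G'))))"
  then obtain \<phi> where hphi: "\<And>(G :: nat graph) v. ugraph G \<Longrightarrow> v \<in> verts G \<Longrightarrow>
        (sat G \<phi> (\<lambda>_. v) \<longleftrightarrow>
         (\<exists>G' :: nat graph. dgraph G' \<and> strict_linear_order_on (verts G') (edges G')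
              \<and> graph_iso 3 G (gad G')))" by blast
  define K where "K = maxk \<phi>"
  define M where "M = depth \<phi>"
  define B where "B = K + 3"
  define a where "a = Suc M * B"
  define n where "n = a + 3 + Suc M * B"
  have p: "K + 3 \<le> B" "Suc M * B \<le> a" "a + 2 + Suc M * B < n" unfolding B_def a_def n_def by simp_all
  have "B \<le> Suc M * B" by simp
  then have a: "0 < a" "a + 3 < n" "a + 2 < n" using p unfolding B_def by auto
  have T: "T1 n \<in> {T1 n, T2 n a}" "T2 n a \<in> {T1 n, T2 n a}" by simp_all
  have fe: "finite (edges (LG n (T1 n)))" "finite (edges (LG n (T2 n a)))"
    using T_fin[OF T(1) a(3)] T_fin[OF T(2) a(3)] by simp_all
  have ug: "ugraph (GG n (T1 n))" "ugraph (GG n (T2 n a))" using gad_ugraph fe by blast+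
  have inj: "inj_on enc (verts (GG n (T1 n)))" "inj_on enc (verts (GG n (T2 n a)))"
    using inj_enc by (auto intro: inj_on_subset)
  have v0: "N1 0 \<in> verts (GG n (T1 n))" "N1 0 \<in> verts (GG n (T2 n a))"
    using N1_verts[OF T(1) a(1,2)] N1_verts[OF T(2) a(1,2)] a by auto
  have s12: "sat (GG n (T1 n)) \<phi> (\<lambda>_. N1 0) = sat (GG n (T2 n a)) \<phi> (\<lambda>_. N1 0)"
    by (rule sat12[OF p]) (simp_all add: K_def M_def)
  have r1: "sat (GG n (T1 n)) \<phi> (\<lambda>_. N1 0) = sat (ren enc (GG n (T1 n))) \<phi> (\<lambda>_. enc (N1 0))"
    by (rule ren_sat[OF inj(1) ug(1) v0(1)])
  have r2: "sat (GG n (T2 n a)) \<phi> (\<lambda>_. N1 0) = sat (ren enc (GG n (T2 n a))) \<phi> (\<lambda>_. enc (N1 0))"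
    by (rule ren_sat[OF inj(2) ug(2) v0(2)])
  have u1: "ugraph (ren enc (GG n (T1 n)))" "enc (N1 0) \<in> verts (ren enc (GG n (T1 n)))"
    using ren_ugraph[OF inj(1) ug(1)] v0 by auto
  have u2: "ugraph (ren enc (GG n (T2 n a)))" "enc (N1 0) \<in> verts (ren enc (GG n (T2 n a)))"
    using ren_ugraph[OF inj(2) ug(2)] v0 by auto
  have "graph_iso 3 (ren enc (GG n (T1 n))) (GG n (T1 n))"
    by (rule ren_iso[OF inj(1) gad_sub])
  then have "sat (ren enc (GG n (T1 n))) \<phi> (\<lambda>_. enc (N1 0))"
    using hphi[OF u1] T1_dgraph T1_lin by blast
  then have "sat (ren enc (GG n (T2 n a))) \<phi> (\<lambda>_. enc (N1 0))" using r1 r2 s12 by simp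
  then obtain G' :: "nat graph" where G': "dgraph G'" "strict_linear_order_on (verts G') (edges G')"
    "graph_iso 3 (ren enc (GG n (T2 n a))) (gad G')"
    using hphi[OF u2] by blast
  then obtain f where f: "bij_betw f (verts (ren enc (GG n (T2 n a)))) (verts (gad G'))"
    "\<forall>u\<in>verts (ren enc (GG n (T2 n a))). \<forall>w\<in>verts (ren enc (GG n (T2 n a))).
        (u, w) \<in> edges (ren enc (GG n (T2 n a))) \<longleftrightarrow> (f u, f w) \<in> edges (gad G')"
    "\<forall>v\<in>verts (ren enc (GG n (T2 n a))). \<forall>i<3. lab (ren enc (GG n (T2 n a))) v i = lab (gad G') (f v) i"
    unfolding graph_iso_def by blast
  have e: "(a, a + 1) \<in> T2 n a" "(a + 1, a + 2) \<in> T2 n a" "(a + 2, a) \<in> T2 n a"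
    using a by (auto simp: T2_def T1_def)
  have tr: "\<exists>p' q'. f (enc (N1 p)) = N1 p' \<and> f (enc (N1 q)) = N1 q' \<and> (p', q') \<in> edges G'"
    if "(p, q) \<in> T2 n a" for p q
  proof -
    note r = ren_path[OF T(2) a(3) that]
    show ?thesis
      by (rule path_transfer[OF f, where p = "enc (N1 p)" and s = "enc (N2 (p, q))" and t = "enc (N3 (p, q))" and q = "enc (N1 q)"])
        (use r in blast)+
  qed
  obtain x1 x2 where x12: "f (enc (N1 a)) = N1 x1" "f (enc (N1 (a + 1))) = N1 x2" "(x1, x2) \<in> edges G'"
    using tr[OF e(1)] by blast
  obtain y2 x3 where x23: "f (enc (N1 (a + 1))) = N1 y2" "f (enc (N1 (a + 2))) = N1 x3" "(y2, x3) \<in> edges G'"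
    using tr[OF e(2)] by blast
  obtain y3 y1 where x31: "f (enc (N1 (a + 2))) = N1 y3" "f (enc (N1 a)) = N1 y1" "(y3, y1) \<in> edges G'"
    using tr[OF e(3)] by blast
  have eq: "y2 = x2" "y3 = x3" "y1 = x1" using x12 x23 x31 by auto
  have tG: "trans (edges G')" using G'(2) unfolding strict_linear_order_on_def by blast
  have "(x1, x3) \<in> edges G'" using tG x12(3) x23(3) eq unfolding trans_def by blast
  then have "(x1, x1) \<in> edges G'" using tG x31(3) eq unfolding trans_def by blast
  then show False using G'(1) unfolding dgraph_def by blast
qed

end
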